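(* Let $f$ satisfy $(\mathcal A)$, let $t_0>0$, $\gamma>1$, and let $\tau:[t_0,+\infty[\to\,]0,+\infty[$ be twice continuously differentiable with $\dot\tau(t)>0$ for all $t$ and $\lim_{t\to+\infty}\tau(t)=+\infty$. Let $x:[t_0,+\infty[\to\mathcal H$ be a twice continuously differentiable solution of $$\ddot x(t)+\frac{(1+\gamma)\dot\tau(t)^2-\tau(t)\ddot\tau(t)}{\tau(t)\dot\tau(t)}\dot x(t)+\gamma\frac{\dot\tau(t)^2}{\tau(t)}\nabla f\Big(x(t)+\frac1\gamma\frac{\tau(t)}{\dot\tau(t)}\dot x(t)\Big)=0 .$$ Then $f(x(t))-\inf_{\mathcal H}f=o\big(1/\tau(t)\big)$ as $t\to+\infty$, and $x(t)$ converges weakly as $t\to+\infty$ to an element of $S=\operatorname{argmin} f$.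
   Context: $\mathcal H$ is a real Hilbert space. Assumption $(\mathcal A)$: $f:\mathcal H\to\mathbb R$ is convex and continuously differentiable, $S=\operatorname{argmin}_{\mathcal H} f\neq\emptyset$, and $\nabla f$ is Lipschitz continuous on bounded subsets of $\mathcal H$. *)

theory Defs
  imports "HOL-Analysis.Analysis" "HOL-Library.Landau_Symbols"
begin

definition assumption_A ::
  "('a::{real_inner,complete_space} \<Rightarrow> real) \<Rightarrow> ('a \<Rightarrow> 'a) \<Rightarrow> bool" where
  "assumption_A f g \<longleftrightarrow>
     convex_on UNIV f \<and>
     (\<forall>x. (f has_derivative (\<lambda>h. g x \<bullet> h)) (at x)) \<and>
     continuous_on UNIV g \<and>
     (\<exists>z. \<forall>y. f z \<le> f y) \<and>
     (\<forall>B. bounded B \<longrightarrow> (\<exists>L. \<forall>u\<in>B. \<forall>v\<in>B. norm (g u - g v) \<le> L * norm (u - v)))"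

definition argmin_set :: "('a \<Rightarrow> real) \<Rightarrow> 'a set" where
  "argmin_set f = {z. \<forall>y. f z \<le> f y}"

definition weakly_tendsto_at_top ::
  "(real \<Rightarrow> 'a::real_inner) \<Rightarrow> 'a \<Rightarrow> bool" where
  "weakly_tendsto_at_top x z \<longleftrightarrow> (\<forall>y. ((\<lambda>t. x t \<bullet> y) \<longlongrightarrow> z \<bullet> y) at_top)"

end

theory Submission
  imports Defs "HOL-Library.Diagonal_Subsequence"
begin


lemma deriv_nonpos_mono:
  fixes h h' :: "real \<Rightarrow> real"
  assumes "T \<le> a" "a \<le> b"
    and d: "\<And>u. a \<le> u \<Longrightarrow> u \<le> b \<Longrightarrow> (h has_real_derivative h' u) (at u within {T..})"
    and n: "\<And>u. a \<le> u \<Longrightarrow> u \<le> b \<Longrightarrow> h' u \<le> 0"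
  shows "h b \<le> h a"
proof -
  have "\<And>u. a \<le> u \<Longrightarrow> u \<le> b \<Longrightarrow> (h has_derivative (\<lambda>d. h' u * d)) (at u within {a..b})"
  proof -
    fix u assume u: "a \<le> u" "u \<le> b"
    have "(h has_derivative (\<lambda>d. h' u * d)) (at u within {T..})"
      using d[OF u] by (simp add: has_field_derivative_def)
    then show "(h has_derivative (\<lambda>d. h' u * d)) (at u within {a..b})"
      by (rule has_derivative_subset) (use assms(1) in auto)
  qed
  from mvt_very_simple[OF assms(2) this] obtain x where x: "x \<in> {a..b}" "h b - h a = h' x * (b - a)"
    by blast
  have "h' x * (b - a) \<le> 0" using n[of x] x(1) assms(2) by (simp add: mult_nonpos_nonneg)
  with x show ?thesis by simp
qed

lemma grad_ineq:
  fixes f :: "'a::real_inner \<Rightarrow> real"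
  assumes cvx: "convex_on UNIV f" and d: "(f has_derivative (\<lambda>h. g \<bullet> h)) (at x)"
  shows "f x + g \<bullet> (y - x) \<le> f y"
proof -
  define \<phi> where "\<phi> s = f (x + s *\<^sub>R (y - x))" for s :: real
  have c: "convex_on UNIV \<phi>"
  proof (rule convex_onI)
    fix t a b :: real assume t: "0 < t" "t < 1"
    have e: "x + ((1 - t) *\<^sub>R a + t *\<^sub>R b) *\<^sub>R (y - x)
        = (1 - t) *\<^sub>R (x + a *\<^sub>R (y - x)) + t *\<^sub>R (x + b *\<^sub>R (y - x))"
      by (simp add: algebra_simps)
    show "\<phi> ((1 - t) *\<^sub>R a + t *\<^sub>R b) \<le> (1 - t) * \<phi> a + t * \<phi> b"
      unfolding \<phi>_def e using convex_onD[OF cvx, of t] t by simp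
  qed simp
  have "(\<phi> has_field_derivative (g \<bullet> (y - x))) (at 0 within UNIV)"
  proof -
    have l: "((\<lambda>s. x + s *\<^sub>R (y - x)) has_derivative (\<lambda>s. s *\<^sub>R (y - x))) (at 0)"
      by (auto intro!: derivative_eq_intros)
    have "((\<lambda>s. f (x + s *\<^sub>R (y - x))) has_derivative (\<lambda>s. g \<bullet> (s *\<^sub>R (y - x)))) (at 0)"
      using has_derivative_compose[OF l, of f "\<lambda>h. g \<bullet> h"] d by (simp add: o_def)
    then show ?thesis unfolding \<phi>_def has_field_derivative_def
      by (simp add: inner_scaleR_right mult.commute[of _ "g \<bullet> (y - x)"])
  qed
  from convex_on_imp_above_tangent[OF c _ _ _ this, of 1] have "\<phi> 1 - \<phi> 0 \<ge> g \<bullet> (y - x)"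
    by simp
  then show ?thesis by (simp add: \<phi>_def)
qed

lemma mono_lim:
  fixes h :: "real \<Rightarrow> real"
  assumes "\<And>s t. T \<le> s \<Longrightarrow> s \<le> t \<Longrightarrow> h t \<le> h s" and "\<And>t. T \<le> t \<Longrightarrow> B \<le> h t"
  shows "\<exists>l. (h \<longlongrightarrow> l) at_top \<and> (\<forall>t\<ge>T. l \<le> h t)"
proof -
  define l where "l = Inf (h ` {T..})"
  have bdd: "bdd_below (h ` {T..})" using assms(2) by (auto intro!: bdd_belowI)
  have lle: "\<forall>t\<ge>T. l \<le> h t" unfolding l_def using bdd by (auto intro!: cInf_lower)
  have "(h \<longlongrightarrow> l) at_top"
  proof (rule tendstoI)
    fix e :: real assume e: "e > 0"
    have "Inf (h ` {T..}) < l + e" using e l_def by simp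
    then obtain s where s: "s \<ge> T" "h s < l + e"
      using cInf_lessD[of "h ` {T..}"] by auto
    show "eventually (\<lambda>t. dist (h t) l < e) at_top"
      using eventually_ge_at_top[of s]
    proof eventually_elim
      case (elim t)
      then have "h t \<le> h s" "l \<le> h t" using assms(1) s lle by auto
      then show ?case using s by (simp add: dist_real_def)
    qed
  qed
  with lle show ?thesis by blast
qed



lemma riesz_sub:
  fixes C :: "'a::{real_inner,complete_space} set" and L :: "'a \<Rightarrow> real"
  assumes sub: "subspace C" and cl: "closed C" and L: "bounded_linear L"
  shows "\<exists>w\<in>C. \<forall>v\<in>C. w \<bullet> v = L v"
proof -
  obtain K where K: "K > 0" "\<And>v. norm (L v) \<le> norm v * K"
    using bounded_linear.pos_bounded[OF L] by blast
  have lin: "linear L" using L bounded_linear.linear by blast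
  define \<Phi> where "\<Phi> v = (v \<bullet> v) / 2 - L v" for v
  have low: "- (K^2) / 2 \<le> \<Phi> v" for v
  proof -
    have "L v \<le> norm v * K" using K(2)[of v] by simp
    moreover have "0 \<le> (norm v - K)^2" by simp
    ultimately show ?thesis unfolding \<Phi>_def power2_norm_eq_inner[symmetric]
      by (simp add: power2_eq_square algebra_simps)
  qed
  have C0: "0 \<in> C" using sub by (simp add: subspace_0)
  define d where "d = Inf (\<Phi> ` C)"
  have bdd: "bdd_below (\<Phi> ` C)" using low by (auto intro!: bdd_belowI)
  have dle: "d \<le> \<Phi> a" if "a \<in> C" for a unfolding d_def using bdd that by (auto intro!: cInf_lower)
  have "\<forall>n. \<exists>v\<in>C. \<Phi> v < d + inverse (real (Suc n))"
  proof
    fix n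
    have "Inf (\<Phi> ` C) < d + inverse (real (Suc n))" unfolding d_def by simp
    then show "\<exists>v\<in>C. \<Phi> v < d + inverse (real (Suc n))"
      using cInf_lessD[of "\<Phi> ` C"] C0 by auto
  qed
  then obtain v where vC: "\<And>n. v n \<in> C" and vd: "\<And>n. \<Phi> (v n) < d + inverse (real (Suc n))"
    by metis
  have par: "\<Phi> a + \<Phi> b - 2 * \<Phi> ((1/2) *\<^sub>R (a + b)) = (norm (a - b))^2 / 4" for a b
  proof -
    have "L ((1/2) *\<^sub>R (a + b)) = (L a + L b) / 2"
      using linear_add[OF lin] linear_scale[OF lin] by simp
    then show ?thesis unfolding \<Phi>_def power2_norm_eq_inner
      by (simp add: inner_add_left inner_add_right inner_diff_left inner_diff_right
          inner_commute field_simps)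
  qed
  have dist_bound: "(norm (v n - v m))^2 < 4 * (inverse (real (Suc n)) + inverse (real (Suc m)))" for n m
  proof -
    have "(1/2) *\<^sub>R (v n + v m) \<in> C"
      using sub vC by (simp add: subspace_add subspace_scale)
    then have "d \<le> \<Phi> ((1/2) *\<^sub>R (v n + v m))" by (rule dle)
    then have "(norm (v n - v m))^2 / 4 < inverse (real (Suc n)) + inverse (real (Suc m))"
      using par[of "v n" "v m"] vd[of n] vd[of m] by linarith
    then show ?thesis by simp
  qed
  have "Cauchy v"
  proof (rule metric_CauchyI)
    fix e :: real assume e: "e > 0"
    obtain M :: nat where M: "8 / e^2 < real M" using reals_Archimedean2 by blast
    have "\<forall>m\<ge>M. \<forall>n\<ge>M. dist (v m) (v n) < e"
    proof (intro allI impI)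
      fix m n assume mn: "m \<ge> M" "n \<ge> M"
      have i: "inverse (real (Suc k)) \<le> inverse (real (Suc M))" if "k \<ge> M" for k
        using that by (simp add: le_imp_inverse_le)
      have e2: "e^2 > 0" using e by simp
      have "8 * inverse (real (Suc M)) < e^2"
      proof -
        have "8 < e^2 * real M" using M e2 by (simp add: field_simps)
        also have "\<dots> < e^2 * real (Suc M)" using e2 by simp
        finally show ?thesis by (simp add: field_simps)
      qed
      moreover have "4 * (inverse (real (Suc m)) + inverse (real (Suc n))) \<le> 8 * inverse (real (Suc M))"
      proof -
        have g: "\<And>a b c::real. a \<le> c \<Longrightarrow> b \<le> c \<Longrightarrow> 4*(a+b) \<le> 8*c" by (simp add: algebra_simps)
        show ?thesis by (rule g[OF i[OF mn(1)] i[OF mn(2)]])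
      qed
      ultimately have "(norm (v m - v n))^2 < e^2"
        using dist_bound[of m n] by (meson less_le_trans less_trans)
      then show "dist (v m) (v n) < e"
        using e by (simp add: dist_norm power_less_imp_less_base)
    qed
    then show "\<exists>M. \<forall>m\<ge>M. \<forall>n\<ge>M. dist (v m) (v n) < e" by blast
  qed
  then obtain w where w: "v \<longlonglongrightarrow> w" using Cauchy_convergent_iff convergent_def by blast
  have wC: "w \<in> C" using closed_sequentially[OF cl vC w] .
  have Phiw: "(\<lambda>n. \<Phi> (v n)) \<longlonglongrightarrow> \<Phi> w"
    unfolding \<Phi>_def by (intro tendsto_intros w bounded_linear.tendsto[OF L]) simp
  have wmin: "\<Phi> w \<le> \<Phi> a" if "a \<in> C" for a
  proof (rule tendsto_le[OF _ _ Phiw])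
    show "(\<lambda>n. \<Phi> a + inverse (real (Suc n))) \<longlonglongrightarrow> \<Phi> a"
      using tendsto_add[OF tendsto_const LIMSEQ_inverse_real_of_nat] by simp
    show "\<forall>\<^sub>F n in sequentially. \<Phi> (v n) \<le> \<Phi> a + inverse (real (Suc n))"
      using vd dle[OF that] by (auto intro!: always_eventually less_imp_le) (smt (verit) vd)
  qed simp
  have "\<forall>u\<in>C. w \<bullet> u = L u"
  proof
    fix u assume uC: "u \<in> C"
    define a where "a = w \<bullet> u - L u"
    define N where "N = u \<bullet> u + 1"
    have N: "N > 0" "u \<bullet> u \<le> N" unfolding N_def by (auto intro: add_nonneg_pos)
    define s where "s = - a / N"
    have "w + s *\<^sub>R u \<in> C" using sub wC uC by (simp add: subspace_add subspace_scale)
    then have m: "\<Phi> w \<le> \<Phi> (w + s *\<^sub>R u)" by (rule wmin)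
    have ex: "\<Phi> (w + s *\<^sub>R u) = \<Phi> w + s * a + s^2 * (u \<bullet> u) / 2"
      unfolding \<Phi>_def a_def using linear_add[OF lin] linear_scale[OF lin]
      by (simp add: inner_add_left inner_add_right inner_commute power2_eq_square field_simps)
    have "s^2 * (u \<bullet> u) \<le> s^2 * N" using N by (simp add: mult_left_mono)
    also have "s^2 * N = a^2 / N" unfolding s_def using N by (simp add: power2_eq_square field_simps)
    finally have "s * a + s^2 * (u \<bullet> u) / 2 \<le> -(a^2 / (2 * N))"
      unfolding s_def using N by (simp add: power2_eq_square field_simps)
    with m ex have "a^2 / (2 * N) \<le> 0" by linarith
    then have "a^2 \<le> 0" using N by (simp add: divide_le_0_iff)
    then have "a = 0" by simp
    then show "w \<bullet> u = L u" unfolding a_def by simp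
  qed
  with wC show ?thesis by blast
qed



lemma closure_span_subspace:
  fixes S :: "'a::real_normed_vector set"
  shows "subspace (closure (span S))"
  unfolding subspace_def
proof (intro conjI ballI allI)
  show "0 \<in> closure (span S)" using closure_subset span_0 by blast
next
  fix x y assume x: "x \<in> closure (span S)" and y: "y \<in> closure (span S)"
  obtain a where a: "\<And>n. a n \<in> span S" "a \<longlonglongrightarrow> x" using x unfolding closure_sequential by blast
  obtain b where b: "\<And>n. b n \<in> span S" "b \<longlonglongrightarrow> y" using y unfolding closure_sequential by blast
  have "\<And>n. a n + b n \<in> span S" using a b span_add by blast
  moreover have "(\<lambda>n. a n + b n) \<longlonglongrightarrow> x + y" by (intro tendsto_intros a b)
  ultimately show "x + y \<in> closure (span S)" unfolding closure_sequential
    by (intro exI[of _ "\<lambda>n. a n + b n"]) auto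
next
  fix c :: real and x assume x: "x \<in> closure (span S)"
  obtain a where a: "\<And>n. a n \<in> span S" "a \<longlonglongrightarrow> x" using x unfolding closure_sequential by blast
  have "\<And>n. c *\<^sub>R a n \<in> span S" using a span_scale by blast
  moreover have "(\<lambda>n. c *\<^sub>R a n) \<longlonglongrightarrow> c *\<^sub>R x" by (intro tendsto_intros a)
  ultimately show "c *\<^sub>R x \<in> closure (span S)" unfolding closure_sequential
    by (intro exI[of _ "\<lambda>n. c *\<^sub>R a n"]) auto
qed

lemma weak_compact:
  fixes u :: "nat \<Rightarrow> 'a::{real_inner,complete_space}"
  assumes B: "\<And>n. norm (u n) \<le> B"
  shows "\<exists>r w. strict_mono r \<and> (\<forall>y. (\<lambda>n. u (r n) \<bullet> y) \<longlonglongrightarrow> w \<bullet> y)"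
proof -
  have B0: "0 \<le> B" using B[of 0] norm_ge_zero order_trans by blast
  have bnd: "\<bar>u n \<bullet> v\<bar> \<le> B * norm v" for n v
    using Cauchy_Schwarz_ineq2[of "u n" v] B[of n] by (meson mult_right_mono norm_ge_zero order_trans)
  interpret D: subseqs "\<lambda>j s. convergent (\<lambda>n. u (s n) \<bullet> u j)"
  proof
    fix j and s :: "nat \<Rightarrow> nat" assume "strict_mono s"
    have "bounded (range (\<lambda>n. u (s n) \<bullet> u j))"
      using bnd by (intro boundedI[where B="B * norm (u j)"]) auto
    from bounded_imp_convergent_subsequence[OF this] obtain l r where
      "strict_mono r" "((\<lambda>n. u (s n) \<bullet> u j) \<circ> r) \<longlonglongrightarrow> l" by blast
    then show "\<exists>r'. strict_mono r' \<and> convergent (\<lambda>n. u ((s \<circ> r') n) \<bullet> u j)"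
      by (auto simp: convergent_def o_def)
  qed
  define r where "r = D.diagseq"
  have r: "strict_mono r" unfolding r_def by (rule D.subseq_diagseq)
  have cj: "convergent (\<lambda>n. u (r n) \<bullet> u j)" for j
  proof -
    have "convergent (\<lambda>n. u ((D.diagseq \<circ> (+) (Suc j)) n) \<bullet> u j)"
    proof (rule D.diagseq_holds)
      fix r' s n assume "strict_mono (r'::nat\<Rightarrow>nat)" "convergent (\<lambda>k. u (s k) \<bullet> u n)"
      then show "convergent (\<lambda>k. u ((s \<circ> r') k) \<bullet> u n)"
        using LIMSEQ_subseq_LIMSEQ by (fastforce simp: convergent_def o_def)
    qed
    then obtain l where "(\<lambda>n. u (D.diagseq (n + Suc j)) \<bullet> u j) \<longlonglongrightarrow> l"
      by (auto simp: convergent_def o_def add.commute)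
    then have "(\<lambda>n. u (D.diagseq n) \<bullet> u j) \<longlonglongrightarrow> l" by (rule LIMSEQ_offset)
    then show ?thesis unfolding r_def convergent_def by blast
  qed
  define M where "M = closure (span (range u))"
  have cU: "convergent (\<lambda>n. u (r n) \<bullet> v)" if "v \<in> span (range u)" for v
    using that
  proof (induction rule: span_induct_alt)
    case base then show ?case by (simp add: convergent_const)
  next
    case (step c x y)
    then obtain j where "x = u j" by blast
    obtain L1 where L1: "(\<lambda>n. u (r n) \<bullet> y) \<longlonglongrightarrow> L1" using step(2) convergent_def by blast
    obtain L2 where L2: "(\<lambda>n. u (r n) \<bullet> u j) \<longlonglongrightarrow> L2" using cj[of j] convergent_def by blast
    have "(\<lambda>n. c * (u (r n) \<bullet> u j) + u (r n) \<bullet> y) \<longlonglongrightarrow> c * L2 + L1"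
      by (intro tendsto_intros L1 L2)
    then show ?case using \<open>x = u j\<close> by (auto simp: convergent_def inner_add_right)
  qed
  have cM: "convergent (\<lambda>n. u (r n) \<bullet> v)" if vM: "v \<in> M" for v
  proof -
    have "Cauchy (\<lambda>n. u (r n) \<bullet> v)"
    proof (rule metric_CauchyI)
      fix e :: real assume e: "e > 0"
      define d where "d = e / (3 * (B + 1))"
      have d: "d > 0" unfolding d_def using e B0 by simp
      obtain v' where v': "v' \<in> span (range u)" "dist v' v < d"
        using vM d unfolding M_def closure_approachable by blast
      have "Cauchy (\<lambda>n. u (r n) \<bullet> v')" using cU[OF v'(1)] Cauchy_convergent_iff by blast
      then obtain N where N: "\<And>m n. m \<ge> N \<Longrightarrow> n \<ge> N \<Longrightarrow> dist (u (r m) \<bullet> v') (u (r n) \<bullet> v') < e/3"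
        using e by (meson divide_pos_pos metric_CauchyD zero_less_numeral)
      have Bd: "B * d < e / 3" unfolding d_def using e B0 by (simp add: field_simps)
      have "\<forall>m\<ge>N. \<forall>n\<ge>N. dist (u (r m) \<bullet> v) (u (r n) \<bullet> v) < e"
      proof (intro allI impI)
        fix m n assume mn: "m \<ge> N" "n \<ge> N"
        have e1: "\<bar>u (r m) \<bullet> (v - v')\<bar> \<le> B * d" and e2: "\<bar>u (r n) \<bullet> (v - v')\<bar> \<le> B * d"
      proof -
        have "B * norm (v - v') \<le> B * d" using v'(2) B0
          by (simp add: dist_norm norm_minus_commute mult_left_mono)
        then show "\<bar>u (r m) \<bullet> (v - v')\<bar> \<le> B * d" "\<bar>u (r n) \<bullet> (v - v')\<bar> \<le> B * d"
          using order_trans[OF bnd[of "r m" "v - v'"]] order_trans[OF bnd[of "r n" "v - v'"]] by blast+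
      qed
        have e3: "\<bar>u (r m) \<bullet> v' - u (r n) \<bullet> v'\<bar> < e/3" using N[OF mn] by (simp add: dist_real_def)
        have "u (r m) \<bullet> v - u (r n) \<bullet> v
           = u (r m) \<bullet> (v - v') + (u (r m) \<bullet> v' - u (r n) \<bullet> v') - u (r n) \<bullet> (v - v')"
          by (simp add: inner_diff_right)
        then show "dist (u (r m) \<bullet> v) (u (r n) \<bullet> v) < e"
        proof -
          have "\<bar>u (r m) \<bullet> v - u (r n) \<bullet> v\<bar> \<le> \<bar>u (r m) \<bullet> (v - v')\<bar> + \<bar>u (r m) \<bullet> v' - u (r n) \<bullet> v'\<bar> + \<bar>u (r n) \<bullet> (v - v')\<bar>"
            unfolding \<open>u (r m) \<bullet> v - u (r n) \<bullet> v = _\<close> by (rule abs_triangle_ineq4[THEN order_trans]) (simp add: abs_triangle_ineq)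
          then show ?thesis using e1 e2 e3 Bd unfolding dist_real_def by linarith
        qed
      qed
      then show "\<exists>N. \<forall>m\<ge>N. \<forall>n\<ge>N. dist (u (r m) \<bullet> v) (u (r n) \<bullet> v) < e" by blast
    qed
    then show ?thesis using Cauchy_convergent_iff by blast
  qed
  have uM: "u n \<in> M" for n
  proof -
    have "u n \<in> span (range u)" by (rule span_base) simp
    then show ?thesis unfolding M_def using closure_subset by (rule subsetD[rotated])
  qed
  have call: "convergent (\<lambda>n. u (r n) \<bullet> y)" for y
  proof -
    have "subspace M" unfolding M_def by (rule closure_span_subspace)
    moreover have "closed M" unfolding M_def by (rule closed_closure)
    ultimately obtain p where
      p: "p \<in> M" "\<And>v. v \<in> M \<Longrightarrow> p \<bullet> v = y \<bullet> v"
      using riesz_sub[of M "\<lambda>v. y \<bullet> v", OF _ _ bounded_linear_inner_right] by blast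
    have "u (r n) \<bullet> y = u (r n) \<bullet> p" for n
      using p(2)[OF uM[of "r n"]] by (simp only: inner_commute)
    then have "(\<lambda>n. u (r n) \<bullet> y) = (\<lambda>n. u (r n) \<bullet> p)" by (rule ext)
    then show ?thesis using cM[OF p(1)] by (simp only:)
  qed
  define L where "L y = lim (\<lambda>n. u (r n) \<bullet> y)" for y
  have Lt: "(\<lambda>n. u (r n) \<bullet> y) \<longlonglongrightarrow> L y" for y
    unfolding L_def using call convergent_LIMSEQ_iff by blast
  have "bounded_linear L"
  proof (rule bounded_linear_intro[where K=B])
    fix x y
    have "(\<lambda>n. u (r n) \<bullet> (x + y)) \<longlonglongrightarrow> L x + L y"
      unfolding inner_add_right by (intro tendsto_intros Lt)
    then show "L (x + y) = L x + L y" using Lt[of "x + y"] LIMSEQ_unique by blast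
  next
    fix c x
    have "(\<lambda>n. u (r n) \<bullet> (c *\<^sub>R x)) \<longlonglongrightarrow> c *\<^sub>R L x"
      unfolding inner_scaleR_right by (simp, intro tendsto_intros Lt)
    then show "L (c *\<^sub>R x) = c *\<^sub>R L x" using Lt[of "c *\<^sub>R x"] LIMSEQ_unique by blast
  next
    fix x
    have "(\<lambda>n. \<bar>u (r n) \<bullet> x\<bar>) \<longlonglongrightarrow> \<bar>L x\<bar>" by (intro tendsto_intros Lt)
    moreover have "\<forall>\<^sub>F n in sequentially. \<bar>u (r n) \<bullet> x\<bar> \<le> B * norm x"
      using bnd by (intro always_eventually) auto
    ultimately have "\<bar>L x\<bar> \<le> B * norm x"
      using tendsto_le[OF sequentially_bot tendsto_const] by blast
    then show "norm (L x) \<le> norm x * B" by (simp add: mult.commute)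
  qed
  from riesz_sub[OF subspace_UNIV closed_UNIV this] obtain w where w: "\<And>v. w \<bullet> v = L v" by auto
  have "\<forall>y. (\<lambda>n. u (r n) \<bullet> y) \<longlonglongrightarrow> w \<bullet> y" using Lt by (simp add: w)
  with r show ?thesis by blast
qed



lemma subseq_principle:
  fixes X :: "nat \<Rightarrow> real"
  assumes H: "\<And>r :: nat \<Rightarrow> nat. strict_mono r \<Longrightarrow> \<exists>r' :: nat \<Rightarrow> nat. strict_mono r' \<and> (\<lambda>n. X (r (r' n))) \<longlonglongrightarrow> l"
  shows "X \<longlonglongrightarrow> l"
proof (rule tendstoI)
  fix e :: real assume e: "e > 0"
  define S where "S = {n. \<not> dist (X n) l < e}"
  show "eventually (\<lambda>n. dist (X n) l < e) sequentially"
  proof (cases "finite S")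
    case True
    then obtain N where "\<forall>n\<in>S. n < N" by (meson finite_nat_bounded lessThan_iff subset_eq)
    then show ?thesis unfolding S_def eventually_sequentially
      by (intro exI[of _ N] allI impI) (metis (mono_tags) leD mem_Collect_eq)
  next
    case False
    from infinite_enumerate[OF this] obtain r :: "nat \<Rightarrow> nat" where r: "strict_mono r" "\<forall>n. r n \<in> S" by blast
    from H[OF r(1)] obtain r' where "(\<lambda>n. X (r (r' n))) \<longlonglongrightarrow> l" by blast
    then have "eventually (\<lambda>n. dist (X (r (r' n))) l < e) sequentially" using e tendstoD by blast
    then obtain n where "dist (X (r (r' n))) l < e" using eventually_sequentially by auto
    with r(2) show ?thesis unfolding S_def by simp
  qed
qed

lemma vd_inner:
  assumes "(a has_vector_derivative a') (at t within T)" "(b has_vector_derivative b') (at t within T)"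
  shows "((\<lambda>s. a s \<bullet> b s) has_real_derivative (a t \<bullet> b' + a' \<bullet> b t)) (at t within T)"
  using has_derivative_inner[OF assms[unfolded has_vector_derivative_def]]
  unfolding has_field_derivative_def
  by (rule has_derivative_eq_rhs) (auto simp: inner_scaleR_left inner_scaleR_right algebra_simps)

lemma chain_f:
  assumes "(f has_derivative (\<lambda>h. G \<bullet> h)) (at (y t))" "(y has_vector_derivative y') (at t within T)"
  shows "((\<lambda>s. f (y s)) has_real_derivative (G \<bullet> y')) (at t within T)"
proof -
  have "(f has_derivative (\<lambda>h. G \<bullet> h)) (at (y t) within y ` T)"
    using assms(1) by (rule has_derivative_at_withinI)
  from diff_chain_within[OF assms(2)[unfolded has_vector_derivative_def] this]
  have "((\<lambda>s. f (y s)) has_derivative (\<lambda>h. G \<bullet> (h *\<^sub>R y'))) (at t within T)"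
    by (simp add: o_def)
  then show ?thesis unfolding has_field_derivative_def
    by (rule has_derivative_eq_rhs) (auto simp: inner_scaleR_right mult.commute)
qed

lemma avg:
  fixes \<tau> \<tau>' U U' \<psi> :: "real \<Rightarrow> real"
  assumes T: "t0 \<le> T" and ga: "a < \<gamma>" "0 \<le> a" and ep: "0 \<le> \<epsilon>"
    and tp: "\<And>t. t \<ge> t0 \<Longrightarrow> \<tau> t > 0" and tp': "\<And>t. t \<ge> t0 \<Longrightarrow> \<tau>' t > 0"
    and td: "\<And>t. t \<ge> t0 \<Longrightarrow> (\<tau> has_real_derivative \<tau>' t) (at t within {t0..})"
    and ud: "\<And>t. t \<ge> t0 \<Longrightarrow> (U has_real_derivative U' t) (at t within {t0..})"
    and ui: "\<And>t. t \<ge> T \<Longrightarrow> U' t \<le> (\<gamma> * \<tau>' t / \<tau> t) * (\<psi> t - U t)"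
    and psi: "\<And>t. t \<ge> T \<Longrightarrow> \<psi> t \<le> \<epsilon> * \<tau> t powr (-a)"
    and t: "t \<ge> T"
  shows "\<tau> t powr \<gamma> * U t \<le> \<tau> T powr \<gamma> * U T + (\<gamma> * \<epsilon> / (\<gamma> - a)) * \<tau> t powr (\<gamma> - a)"
proof -
  define K where "K = \<gamma> * \<epsilon> / (\<gamma> - a)"
  have K: "K \<ge> 0" unfolding K_def using ga ep by auto
  define H where "H u = \<tau> u powr \<gamma> * U u - K * \<tau> u powr (\<gamma> - a)" for u
  define H' where "H' u = (\<gamma> * \<tau> u powr (\<gamma> - 1) * \<tau>' u) * U u + U' u * \<tau> u powr \<gamma>
     - K * ((\<gamma> - a) * \<tau> u powr (\<gamma> - a - 1) * \<tau>' u)" for u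
  have hd: "(H has_real_derivative H' u) (at u within {t0..})" if u: "u \<ge> t0" for u
  proof -
    have p1: "((\<lambda>u. \<tau> u powr \<gamma>) has_real_derivative (\<gamma> * \<tau> u powr (\<gamma> - 1) * \<tau>' u)) (at u within {t0..})"
      using DERIV_chain2[OF has_real_derivative_powr[OF tp[OF u]] td[OF u]] by simp
    have p2: "((\<lambda>u. \<tau> u powr (\<gamma> - a)) has_real_derivative ((\<gamma> - a) * \<tau> u powr (\<gamma> - a - 1) * \<tau>' u)) (at u within {t0..})"
      using DERIV_chain2[OF has_real_derivative_powr[OF tp[OF u]] td[OF u]] by simp
    show ?thesis unfolding H_def H'_def
      by (intro DERIV_diff DERIV_mult p1 ud[OF u] DERIV_cmult p2)
  qed
  have hn: "H' u \<le> 0" if u: "T \<le> u" for u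
  proof -
    have u0: "u \<ge> t0" using u T by simp
    define P where "P = \<tau> u powr (\<gamma> - 1)"
    define Q where "Q = \<tau> u powr (-a)"
    have tpu: "\<tau> u > 0" using tp[OF u0] .
    have e1: "\<tau> u powr \<gamma> = P * \<tau> u"
    proof -
      have "\<tau> u powr (\<gamma> - 1) * \<tau> u powr 1 = \<tau> u powr ((\<gamma> - 1) + 1)" by (rule powr_add[symmetric])
      then show ?thesis unfolding P_def using tpu by simp
    qed
    have e2: "\<tau> u powr (\<gamma> - a - 1) = P * Q"
    proof -
      have "\<tau> u powr (\<gamma> - 1) * \<tau> u powr (-a) = \<tau> u powr ((\<gamma> - 1) + (-a))" by (rule powr_add[symmetric])
      moreover have "(\<gamma> - 1) + (-a) = \<gamma> - a - 1" by simp
      ultimately show ?thesis unfolding P_def Q_def by metis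
    qed
    have P: "P > 0" unfolding P_def using tpu by simp
    have a1: "\<tau> u powr \<gamma> * U' u \<le> \<tau> u powr \<gamma> * ((\<gamma> * \<tau>' u / \<tau> u) * (\<psi> u - U u))"
      using ui[OF u] tpu by (intro mult_left_mono) auto
    also have "\<dots> = \<gamma> * P * \<tau>' u * (\<psi> u - U u)" unfolding e1 using tpu by (simp add: field_simps)
    finally have a1: "\<tau> u powr \<gamma> * U' u \<le> \<gamma> * P * \<tau>' u * (\<psi> u - U u)" .
    have a2: "\<gamma> * P * \<tau>' u * \<psi> u \<le> \<gamma> * P * \<tau>' u * (\<epsilon> * Q)"
      unfolding Q_def using psi[OF u] P tp'[OF u0] ga by (intro mult_left_mono) auto
    have a3: "K * ((\<gamma> - a) * \<tau> u powr (\<gamma> - a - 1) * \<tau>' u) = \<gamma> * P * \<tau>' u * (\<epsilon> * Q)"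
      unfolding K_def e2 using ga by (simp add: field_simps)
    show ?thesis unfolding H'_def a3 P_def[symmetric] using a1 a2 by (simp add: algebra_simps)
  qed
  have "H t \<le> H T"
    by (rule deriv_nonpos_mono[OF T t hd hn]) (use T in auto)
  moreover have "0 \<le> K * \<tau> T powr (\<gamma> - a)" using K by simp
  ultimately show ?thesis unfolding H_def K_def[symmetric] by linarith
qed


lemma avg2:
  fixes \<tau> \<tau>' U U' \<psi> :: "real \<Rightarrow> real"
  assumes T: "t0 \<le> T" and ga: "a < \<gamma>" "0 \<le> a" and ep: "0 \<le> \<epsilon>"
    and tp: "\<And>t. t \<ge> t0 \<Longrightarrow> \<tau> t > 0" and tp': "\<And>t. t \<ge> t0 \<Longrightarrow> \<tau>' t > 0"
    and td: "\<And>t. t \<ge> t0 \<Longrightarrow> (\<tau> has_real_derivative \<tau>' t) (at t within {t0..})"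
    and ud: "\<And>t. t \<ge> t0 \<Longrightarrow> (U has_real_derivative U' t) (at t within {t0..})"
    and ui: "\<And>t. t \<ge> T \<Longrightarrow> U' t \<le> (\<gamma> * \<tau>' t / \<tau> t) * (\<psi> t - U t)"
    and psi: "\<And>t. t \<ge> T \<Longrightarrow> \<psi> t \<le> \<epsilon> * \<tau> t powr (-a)"
    and t: "t \<ge> T"
  shows "U t \<le> (\<tau> T powr \<gamma> * U T) * \<tau> t powr (-\<gamma>) + (\<gamma> * \<epsilon> / (\<gamma> - a)) * \<tau> t powr (-a)"
proof -
  have h: "\<tau> t powr \<gamma> * U t \<le> \<tau> T powr \<gamma> * U T + (\<gamma> * \<epsilon> / (\<gamma> - a)) * \<tau> t powr (\<gamma> - a)"
    by (rule avg[OF assms])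
  have tt: "\<tau> t > 0" using tp T t by simp
  have q: "\<tau> t powr (-\<gamma>) > 0" using tt by simp
  have e1: "\<tau> t powr (-\<gamma>) * \<tau> t powr \<gamma> = 1"
  proof -
    have "\<tau> t powr (-\<gamma>) * \<tau> t powr \<gamma> = \<tau> t powr (-\<gamma> + \<gamma>)" by (rule powr_add[symmetric])
    then show ?thesis using tt by simp
  qed
  have e2: "\<tau> t powr (-\<gamma>) * \<tau> t powr (\<gamma> - a) = \<tau> t powr (-a)"
  proof -
    have "\<tau> t powr (-\<gamma>) * \<tau> t powr (\<gamma> - a) = \<tau> t powr (-\<gamma> + (\<gamma> - a))" by (rule powr_add[symmetric])
    moreover have "-\<gamma> + (\<gamma> - a) = -a" by simp
    ultimately show ?thesis by metis
  qed
  from mult_left_mono[OF h less_imp_le[OF q]]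
  have "\<tau> t powr (-\<gamma>) * (\<tau> t powr \<gamma> * U t) \<le> \<tau> t powr (-\<gamma>) * (\<tau> T powr \<gamma> * U T + (\<gamma> * \<epsilon> / (\<gamma> - a)) * \<tau> t powr (\<gamma> - a))" .
  also have "\<tau> t powr (-\<gamma>) * (\<tau> t powr \<gamma> * U t) = U t" using e1 by (simp add: mult.assoc[symmetric])
  also have "\<tau> t powr (-\<gamma>) * (\<tau> T powr \<gamma> * U T + (\<gamma> * \<epsilon> / (\<gamma> - a)) * \<tau> t powr (\<gamma> - a))
     = (\<tau> T powr \<gamma> * U T) * \<tau> t powr (-\<gamma>) + (\<gamma> * \<epsilon> / (\<gamma> - a)) * (\<tau> t powr (-\<gamma>) * \<tau> t powr (\<gamma> - a))"
    by (simp add: algebra_simps)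
  finally show ?thesis unfolding e2 .
qed



theorem mainTheorem7:
  fixes f :: "'a::{real_inner,complete_space} \<Rightarrow> real"
    and g :: "'a \<Rightarrow> 'a"
    and \<tau> \<tau>' \<tau>'' :: "real \<Rightarrow> real"
    and x x' x'' :: "real \<Rightarrow> 'a"
    and t0 \<gamma> :: real
  assumes A: "assumption_A f g"
    and t0: "t0 > 0" and gam: "\<gamma> > 1"
    and tau_pos: "\<And>t. t \<ge> t0 \<Longrightarrow> \<tau> t > 0"
    and tau_d1: "\<And>t. t \<ge> t0 \<Longrightarrow> (\<tau> has_real_derivative \<tau>' t) (at t within {t0..})"
    and tau_d2: "\<And>t. t \<ge> t0 \<Longrightarrow> (\<tau>' has_real_derivative \<tau>'' t) (at t within {t0..})"
    and tau_cont: "continuous_on {t0..} \<tau>''"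
    and tau'_pos: "\<And>t. t \<ge> t0 \<Longrightarrow> \<tau>' t > 0"
    and tau_lim: "filterlim \<tau> at_top at_top"
    and x_d1: "\<And>t. t \<ge> t0 \<Longrightarrow> (x has_vector_derivative x' t) (at t within {t0..})"
    and x_d2: "\<And>t. t \<ge> t0 \<Longrightarrow> (x' has_vector_derivative x'' t) (at t within {t0..})"
    and x_cont: "continuous_on {t0..} x''"
    and ode: "\<And>t. t \<ge> t0 \<Longrightarrow>
       x'' t + (((1 + \<gamma>) * (\<tau>' t)\<^sup>2 - \<tau> t * \<tau>'' t) / (\<tau> t * \<tau>' t)) *\<^sub>R x' t
       + (\<gamma> * (\<tau>' t)\<^sup>2 / \<tau> t) *\<^sub>R g (x t + ((1 / \<gamma>) * (\<tau> t / \<tau>' t)) *\<^sub>R x' t) = 0"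
  shows "(\<lambda>t. f (x t) - (INF y. f y)) \<in> o[at_top](\<lambda>t. 1 / \<tau> t) \<and>
         (\<exists>z\<in>argmin_set f. weakly_tendsto_at_top x z)"
proof -
  have cvx: "convex_on UNIV f" and fd: "\<And>y. (f has_derivative (\<lambda>h. g y \<bullet> h)) (at y)"
    and ex: "\<exists>z. \<forall>y. f z \<le> f y"
    using A unfolding assumption_A_def by blast+
  obtain p0 where p0: "\<And>y. f p0 \<le> f y" using ex by blast
  define m where "m = f p0"
  have mle: "\<And>y. m \<le> f y" unfolding m_def using p0 .
  have INF: "(INF y. f y) = m"
  proof (rule antisym)
    show "(INF y. f y) \<le> m" unfolding m_def
      by (rule cINF_lower) (use p0 in \<open>auto intro!: bdd_belowI\<close>)
    show "m \<le> (INF y. f y)" by (rule cINF_greatest) (use mle in auto)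
  qed
  have gi: "\<And>a b. f a + g a \<bullet> (b - a) \<le> f b" using grad_ineq[OF cvx fd] .
  have Siff: "\<And>w. w \<in> argmin_set f \<longleftrightarrow> f w \<le> m"
    unfolding argmin_set_def using mle p0 m_def by (auto intro: order_trans)
  have g1: "\<gamma> > 0" using gam by simp

  define c where "c t = \<tau> t / (\<gamma> * \<tau>' t)" for t
  define z where "z t = x t + c t *\<^sub>R x' t" for t
  have zarg: "x t + ((1 / \<gamma>) * (\<tau> t / \<tau>' t)) *\<^sub>R x' t = z t" for t
    unfolding z_def c_def by simp
  have zd: "(z has_vector_derivative (- \<tau>' t) *\<^sub>R g (z t)) (at t within {t0..})" if t: "t \<ge> t0" for t
  proof -
    have tp: "\<tau> t > 0" "\<tau>' t > 0" using tau_pos[OF t] tau'_pos[OF t] by auto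
    define C where "C = (\<tau>' t * (\<gamma> * \<tau>' t) - \<tau> t * (\<gamma> * \<tau>'' t)) / ((\<gamma> * \<tau>' t) * (\<gamma> * \<tau>' t))"
    have cd: "(c has_real_derivative C) (at t within {t0..})"
    proof -
      have "((\<lambda>t. \<tau> t / (\<gamma> * \<tau>' t)) has_real_derivative C) (at t within {t0..})"
        unfolding C_def using tp g1
        by (intro DERIV_divide tau_d1[OF t] DERIV_cmult tau_d2[OF t]) auto
      then show ?thesis unfolding c_def[abs_def] .
    qed
    have zd0: "(z has_vector_derivative (x' t + (c t *\<^sub>R x'' t + C *\<^sub>R x' t))) (at t within {t0..})"
    proof -
      have "((\<lambda>t. x t + c t *\<^sub>R x' t) has_vector_derivative (x' t + (c t *\<^sub>R x'' t + C *\<^sub>R x' t))) (at t within {t0..})"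
        by (intro has_vector_derivative_add x_d1[OF t] has_vector_derivative_scaleR cd x_d2[OF t])
      then show ?thesis unfolding z_def[abs_def] .
    qed
    define k1 where "k1 = ((1 + \<gamma>) * (\<tau>' t)\<^sup>2 - \<tau> t * \<tau>'' t) / (\<tau> t * \<tau>' t)"
    define k2 where "k2 = \<gamma> * (\<tau>' t)\<^sup>2 / \<tau> t"
    have o: "x'' t + k1 *\<^sub>R x' t + k2 *\<^sub>R g (z t) = 0"
      using ode[OF t] unfolding k1_def k2_def zarg .
    have xe: "x'' t = - (k1 *\<^sub>R x' t) - k2 *\<^sub>R g (z t)"
    proof -
      have "x'' t = (x'' t + k1 *\<^sub>R x' t + k2 *\<^sub>R g (z t)) - k1 *\<^sub>R x' t - k2 *\<^sub>R g (z t)" by simp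
      then show ?thesis using o by simp
    qed
    have e1: "1 + C - c t * k1 = 0" unfolding C_def c_def k1_def using tp g1
      by (simp add: field_simps power2_eq_square)
    have e2: "c t * k2 = \<tau>' t" unfolding c_def k2_def using tp g1
      by (simp add: field_simps power2_eq_square)
    have "x' t + (c t *\<^sub>R x'' t + C *\<^sub>R x' t) = (1 + C - c t * k1) *\<^sub>R x' t - (c t * k2) *\<^sub>R g (z t)"
      unfolding xe by (simp add: algebra_simps)
    also have "\<dots> = (- \<tau>' t) *\<^sub>R g (z t)" unfolding e1 e2 by simp
    finally show ?thesis using zd0 by simp
  qed
  have fzd: "((\<lambda>s. f (z s)) has_real_derivative (g (z t) \<bullet> ((- \<tau>' t) *\<^sub>R g (z t)))) (at t within {t0..})"
    if t: "t \<ge> t0" for t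
    using chain_f[OF fd zd[OF t]] .
  have fzmono: "f (z t) \<le> f (z s)" if st: "t0 \<le> s" "s \<le> t" for s t
  proof (rule deriv_nonpos_mono[OF st fzd])
    fix u assume "s \<le> u" "u \<le> t"
    then have "\<tau>' u > 0" using tau'_pos st by auto
    then show "g (z u) \<bullet> ((- \<tau>' u) *\<^sub>R g (z u)) \<le> 0" by (simp add: inner_scaleR_right)
  qed (use st in auto)
  define Gp where "Gp p t = (z t - p) \<bullet> (z t - p)" for p t
  define GD where "GD p t = (z t - p) \<bullet> ((- \<tau>' t) *\<^sub>R g (z t)) + ((- \<tau>' t) *\<^sub>R g (z t)) \<bullet> (z t - p)" for p t
  have Gd: "((\<lambda>s. Gp p s) has_real_derivative GD p t) (at t within {t0..})" if t: "t \<ge> t0" for p t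
  proof -
    have d: "((\<lambda>s. z s - p) has_vector_derivative ((- \<tau>' t) *\<^sub>R g (z t))) (at t within {t0..})"
      using has_vector_derivative_diff[OF zd[OF t] has_vector_derivative_const[of p]] by simp
    show ?thesis unfolding Gp_def GD_def using vd_inner[OF d d] .
  qed
  have GDle: "GD p t \<le> - 2 * \<tau>' t * (f (z t) - m)" if t: "t \<ge> t0" and p: "f p \<le> m" for p t
  proof -
    have "f (z t) - f p \<le> g (z t) \<bullet> (z t - p)" using gi[of "z t" p]
      by (simp add: inner_diff_right)
    then have "f (z t) - m \<le> g (z t) \<bullet> (z t - p)" using p by simp
    moreover have "\<tau>' t > 0" using tau'_pos[OF t] .
    ultimately have "2 * \<tau>' t * (f (z t) - m) \<le> 2 * \<tau>' t * (g (z t) \<bullet> (z t - p))"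
      by (intro mult_left_mono) auto
    moreover have "GD p t = - 2 * \<tau>' t * (g (z t) \<bullet> (z t - p))"
      unfolding GD_def by (simp add: inner_scaleR_left inner_scaleR_right inner_commute)
    ultimately show ?thesis by simp
  qed
  have Gmono: "Gp p t \<le> Gp p s" if st: "t0 \<le> s" "s \<le> t" and p: "f p \<le> m" for p s t
  proof (rule deriv_nonpos_mono[OF st Gd])
    fix u assume u: "s \<le> u" "u \<le> t"
    then have u0: "u \<ge> t0" using st by simp
    have "0 \<le> 2 * \<tau>' u * (f (z u) - m)" using tau'_pos[OF u0] mle[of "z u"] by simp
    then show "GD p u \<le> 0" using GDle[OF u0 p] by simp
  qed (use st in auto)
  have Gnn: "0 \<le> Gp p t" for p t unfolding Gp_def by simp
  have Glim: "\<exists>L. (Gp p \<longlongrightarrow> L) at_top \<and> (\<forall>t\<ge>t0. L \<le> Gp p t)" if p: "f p \<le> m" for p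
    using mono_lim[of t0 "Gp p" 0] Gmono[OF _ _ p] Gnn by blast
  have p0m: "f p0 \<le> m" unfolding m_def by simp
  have Z3: "2 * (\<tau> t - \<tau> s) * (f (z t) - m) \<le> Gp p0 s - Gp p0 t" if st: "t0 \<le> s" "s \<le> t" for s t
  proof -
    define K where "K = 2 * (f (z t) - m)"
    have "(\<lambda>u. Gp p0 u + K * (\<tau> u - \<tau> s)) t \<le> (\<lambda>u. Gp p0 u + K * (\<tau> u - \<tau> s)) s"
    proof (rule deriv_nonpos_mono[OF st])
      fix u assume u: "s \<le> u" "u \<le> t"
      then have u0: "u \<ge> t0" using st by simp
      show "((\<lambda>u. Gp p0 u + K * (\<tau> u - \<tau> s)) has_real_derivative (GD p0 u + K * (\<tau>' u - 0))) (at u within {t0..})"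
        by (intro DERIV_add Gd[OF u0] DERIV_cmult DERIV_diff tau_d1[OF u0] DERIV_const)
      have "f (z t) \<le> f (z u)" using fzmono[of u t] u0 u by simp
      then have "K * \<tau>' u \<le> 2 * \<tau>' u * (f (z u) - m)" unfolding K_def using tau'_pos[OF u0]
        by (simp add: mult_left_mono)
      then show "GD p0 u + K * (\<tau>' u - 0) \<le> 0" using GDle[OF u0 p0m] by simp
    qed
    then show ?thesis unfolding K_def by (simp add: algebra_simps)
  qed
  have Fz0: "\<forall>\<^sub>F t in at_top. f (z t) - m \<le> \<delta>" if d: "\<delta> > 0" for \<delta>
  proof -
    define K where "K = Gp p0 t0 / (2 * \<delta>) + 1"
    have ev: "\<forall>\<^sub>F t in at_top. \<tau> t0 + K \<le> \<tau> t" using tau_lim unfolding filterlim_at_top by blast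
    show ?thesis using ev eventually_ge_at_top[of t0]
    proof eventually_elim
      case (elim t)
      have Kp: "K > 0" unfolding K_def using d Gnn[of p0 t0] by (simp add: add_nonneg_pos)
      have tt: "t0 \<le> t" using elim by simp
      have "2 * (\<tau> t - \<tau> t0) * (f (z t) - m) \<le> Gp p0 t0" using Z3[OF order_refl tt] Gnn[of p0 t] by simp
      moreover have "Gp p0 t0 < 2 * K * \<delta>" unfolding K_def using d by (simp add: field_simps)
      moreover have "K \<le> \<tau> t - \<tau> t0" using elim by simp
      ultimately show ?case
      proof -
        assume a: "2 * (\<tau> t - \<tau> t0) * (f (z t) - m) \<le> Gp p0 t0" "Gp p0 t0 < 2 * K * \<delta>" "K \<le> \<tau> t - \<tau> t0"
        show ?thesis
        proof (rule ccontr)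
          assume "\<not> f (z t) - m \<le> \<delta>"
          then have "\<delta> < f (z t) - m" by simp
          then have "2 * K * \<delta> \<le> 2 * (\<tau> t - \<tau> t0) * (f (z t) - m)"
            using a(3) Kp d by (intro mult_mono) auto
          with a(1,2) show False by simp
        qed
      qed
    qed
  qed
  have zrate: "\<exists>T\<ge>t0. \<forall>t\<ge>T. f (z t) - m \<le> \<epsilon> * \<tau> t powr (-1)" if e: "\<epsilon> > 0" for \<epsilon>
  proof -
    obtain L where L: "(Gp p0 \<longlongrightarrow> L) at_top" "\<forall>t\<ge>t0. L \<le> Gp p0 t" using Glim[OF p0m] by blast
    have "\<forall>\<^sub>F t in at_top. dist (Gp p0 t) L < \<epsilon>" using tendstoD[OF L(1) e] .
    then obtain N where N: "\<And>t. t \<ge> N \<Longrightarrow> dist (Gp p0 t) L < \<epsilon>" unfolding eventually_at_top_linorder by blast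
    define s where "s = max N t0"
    have s: "s \<ge> t0" "Gp p0 s \<le> L + \<epsilon>" using N[of s] unfolding s_def by (auto simp: dist_real_def)
    have ts: "\<tau> s > 0" using tau_pos[OF s(1)] .
    have "\<forall>\<^sub>F t in at_top. f (z t) - m \<le> \<epsilon> / (2 * \<tau> s)" using Fz0 e ts by simp
    then obtain N2 where N2: "\<And>t. t \<ge> N2 \<Longrightarrow> f (z t) - m \<le> \<epsilon> / (2 * \<tau> s)"
      unfolding eventually_at_top_linorder by blast
    define T where "T = max s N2"
    have "\<forall>t\<ge>T. f (z t) - m \<le> \<epsilon> * \<tau> t powr (-1)"
    proof (intro allI impI)
      fix t assume t: "t \<ge> T"
      have st: "s \<le> t" "t0 \<le> t" using t s unfolding T_def by auto
      have tt: "\<tau> t > 0" using tau_pos[OF st(2)] .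
      have a1: "2 * (\<tau> t - \<tau> s) * (f (z t) - m) \<le> \<epsilon>" using Z3[OF s(1) st(1)] s(2) L(2) st(2) by fastforce
      have "f (z t) - m \<le> \<epsilon> / (2 * \<tau> s)" using N2 t unfolding T_def by simp
      then have a2: "2 * \<tau> s * (f (z t) - m) \<le> \<epsilon>" using ts by (simp add: field_simps)
      have "2 * \<tau> t * (f (z t) - m) \<le> 2 * \<epsilon>" using a1 a2 by (simp add: algebra_simps)
      then show "f (z t) - m \<le> \<epsilon> * \<tau> t powr (-1)" using tt
        by (simp add: powr_neg_one field_simps)
    qed
    moreover have "t0 \<le> T" unfolding T_def using s(1) by simp
    ultimately show ?thesis by blast
  qed
  have xz: "x' t = (\<gamma> * \<tau>' t / \<tau> t) *\<^sub>R (z t - x t)" if t: "t \<ge> t0" for t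
  proof -
    have tp: "\<tau> t > 0" "\<tau>' t > 0" using tau_pos[OF t] tau'_pos[OF t] by auto
    have "(\<gamma> * \<tau>' t / \<tau> t) *\<^sub>R (z t - x t) = ((\<gamma> * \<tau>' t / \<tau> t) * c t) *\<^sub>R x' t"
      unfolding z_def by simp
    also have "(\<gamma> * \<tau>' t / \<tau> t) * c t = 1" unfolding c_def using tp g1 by (simp add: field_simps)
    finally show ?thesis by simp
  qed
  have xrate: "\<forall>\<^sub>F t in at_top. f (x t) - m \<le> \<epsilon> / \<tau> t" if e: "\<epsilon> > 0" for \<epsilon>
  proof -
    define e1 where "e1 = \<epsilon> * (\<gamma> - 1) / (2 * \<gamma>)"
    have e1: "e1 > 0" unfolding e1_def using e gam by simp
    obtain T where T: "T \<ge> t0" "\<And>t. t \<ge> T \<Longrightarrow> f (z t) - m \<le> e1 * \<tau> t powr (-1)"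
      using zrate[OF e1] by blast
    have av: "f (x t) - m \<le> (\<tau> T powr \<gamma> * (f (x T) - m)) * \<tau> t powr (-\<gamma>)
        + (\<gamma> * e1 / (\<gamma> - 1)) * \<tau> t powr (-1)" if t: "t \<ge> T" for t
    proof (rule avg2[OF T(1), of 1 \<gamma> e1 \<tau> \<tau>' "\<lambda>t. f (x t) - m" "\<lambda>t. g (x t) \<bullet> x' t" "\<lambda>t. f (z t) - m" t])
      show "1 < \<gamma>" using gam .
      show "(0::real) \<le> 1" by simp
      show "0 \<le> e1" using e1 by simp
      show "\<And>t. t0 \<le> t \<Longrightarrow> 0 < \<tau> t" using tau_pos .
      show "\<And>t. t0 \<le> t \<Longrightarrow> 0 < \<tau>' t" using tau'_pos .
      show "\<And>t. t0 \<le> t \<Longrightarrow> (\<tau> has_real_derivative \<tau>' t) (at t within {t0..})" using tau_d1 .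
      show "((\<lambda>t. f (x t) - m) has_real_derivative g (x u) \<bullet> x' u) (at u within {t0..})" if u: "t0 \<le> u" for u
        using DERIV_diff[OF chain_f[OF fd x_d1[OF u]] DERIV_const[of m]] by simp
      show "g (x u) \<bullet> x' u \<le> \<gamma> * \<tau>' u / \<tau> u * (f (z u) - m - (f (x u) - m))" if u: "T \<le> u" for u
      proof -
        have u0: "u \<ge> t0" using u T by simp
        have k: "\<gamma> * \<tau>' u / \<tau> u > 0" using tau_pos[OF u0] tau'_pos[OF u0] g1 by simp
        have "g (x u) \<bullet> (z u - x u) \<le> f (z u) - f (x u)" using gi[of "x u" "z u"] by simp
        then have "\<gamma> * \<tau>' u / \<tau> u * (g (x u) \<bullet> (z u - x u)) \<le> \<gamma> * \<tau>' u / \<tau> u * (f (z u) - f (x u))"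
          using k by (intro mult_left_mono) auto
        then show ?thesis unfolding xz[OF u0] by (simp add: inner_scaleR_right)
      qed
      show "\<And>u. T \<le> u \<Longrightarrow> f (z u) - m \<le> e1 * \<tau> u powr - 1" using T(2) .
      show "T \<le> t" using t .
    qed
    define C where "C = \<tau> T powr \<gamma> * (f (x T) - m)"
    have lim0: "((\<lambda>t. \<tau> t powr (1 - \<gamma>)) \<longlongrightarrow> 0) at_top"
      using tendsto_neg_powr[OF _ tau_lim] gam by simp
    then have "((\<lambda>t. \<bar>C\<bar> * \<tau> t powr (1 - \<gamma>)) \<longlongrightarrow> 0) at_top"
      using tendsto_mult_right_zero by blast
    then have ev: "\<forall>\<^sub>F t in at_top. \<bar>C\<bar> * \<tau> t powr (1 - \<gamma>) < \<epsilon> / 2"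
      using order_tendstoD(2)[of _ 0 at_top "\<epsilon> / 2"] e by simp
    show ?thesis using ev eventually_ge_at_top[of T]
    proof eventually_elim
      case (elim t)
      have t0t: "t \<ge> t0" using elim T by simp
      have tt: "\<tau> t > 0" using tau_pos[OF t0t] .
      have pw: "\<tau> t powr (-\<gamma>) = \<tau> t powr (1 - \<gamma>) * \<tau> t powr (-1)"
      proof -
        have "\<tau> t powr (1 - \<gamma>) * \<tau> t powr (-1) = \<tau> t powr ((1 - \<gamma>) + (-1))" by (rule powr_add[symmetric])
        moreover have "(1 - \<gamma>) + (-1) = - \<gamma>" by simp
        ultimately show ?thesis by metis
      qed
      have "C * \<tau> t powr (1 - \<gamma>) \<le> \<epsilon> / 2"
        using elim abs_ge_self[of C] by (smt (verit) mult_right_mono powr_ge_zero)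
      then have a: "C * \<tau> t powr (-\<gamma>) \<le> (\<epsilon> / 2) * \<tau> t powr (-1)"
      proof -
        have "C * \<tau> t powr (1 - \<gamma>) * \<tau> t powr (-1) \<le> (\<epsilon> / 2) * \<tau> t powr (-1)"
          using \<open>C * \<tau> t powr (1 - \<gamma>) \<le> \<epsilon> / 2\<close> by (rule mult_right_mono) simp
        then show ?thesis unfolding pw by (simp add: mult.assoc)
      qed
      have b: "(\<gamma> * e1 / (\<gamma> - 1)) = \<epsilon> / 2" unfolding e1_def using gam by (simp add: field_simps)
      have "f (x t) - m \<le> (\<epsilon> / 2) * \<tau> t powr (-1) + (\<epsilon> / 2) * \<tau> t powr (-1)"
        using av[of t] elim a b unfolding C_def by simp
      then show ?case using tt by (simp add: powr_neg_one)
    qed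
  qed
  have part1: "(\<lambda>t. f (x t) - (INF y. f y)) \<in> o[at_top](\<lambda>t. 1 / \<tau> t)"
  proof (rule landau_o.smallI)
    fix e :: real assume e: "e > 0"
    show "\<forall>\<^sub>F t in at_top. norm (f (x t) - (INF y. f y)) \<le> e * norm (1 / \<tau> t)"
      using xrate[OF e] eventually_ge_at_top[of t0]
    proof eventually_elim
      case (elim t)
      then have tt: "\<tau> t > 0" using tau_pos by simp
      have "0 \<le> f (x t) - m" using mle by simp
      then show ?case unfolding INF using elim tt by simp
    qed
  qed
  define zz where "zz t = z (max t0 t)" for t
  have zzev: "\<forall>\<^sub>F t in at_top. zz t = z t"
    using eventually_ge_at_top[of t0] by eventually_elim (simp add: zz_def)
  define B where "B = norm p0 + norm (z t0 - p0)"
  have zzb: "norm (zz t) \<le> B" for t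
  proof -
    have "Gp p0 (max t0 t) \<le> Gp p0 t0" by (rule Gmono[OF order_refl _ p0m]) simp
    then have "(norm (zz t - p0))^2 \<le> (norm (z t0 - p0))^2"
      unfolding Gp_def zz_def power2_norm_eq_inner .
    then have "norm (zz t - p0) \<le> norm (z t0 - p0)" by (rule power2_le_imp_le) simp
    moreover have "norm (zz t) \<le> norm p0 + norm (zz t - p0)" by (rule norm_triangle_sub)
    ultimately show ?thesis unfolding B_def by linarith
  qed
  have lsc: "f w \<le> m" if s: "filterlim s at_top sequentially"
    and w: "\<forall>y. (\<lambda>n. zz (s n) \<bullet> y) \<longlonglongrightarrow> w \<bullet> y" for s w
  proof (rule field_le_epsilon)
    fix d :: real assume d: "d > 0"
    have "\<forall>\<^sub>F t in at_top. f (zz t) - m \<le> d" using Fz0[OF d] zzev by eventually_elim simp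
    then have ev: "\<forall>\<^sub>F n in sequentially. f (zz (s n)) - m \<le> d" using s unfolding filterlim_iff by blast
    have "(\<lambda>n. g w \<bullet> zz (s n)) \<longlonglongrightarrow> g w \<bullet> w" using w[rule_format, of "g w"] by (simp add: inner_commute)
    then have lim: "(\<lambda>n. f w + g w \<bullet> (zz (s n) - w)) \<longlonglongrightarrow> f w + (g w \<bullet> w - g w \<bullet> w)"
      unfolding inner_diff_right by (rule tendsto_add[OF tendsto_const tendsto_diff[OF _ tendsto_const]])
    have "\<forall>\<^sub>F n in sequentially. f w + g w \<bullet> (zz (s n) - w) \<le> m + d"
      using ev
    proof eventually_elim
      case (elim n)
      have "f w + g w \<bullet> (zz (s n) - w) \<le> f (zz (s n))" by (rule gi)
      then show ?case using elim by linarith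
    qed
    from tendsto_le[OF sequentially_bot tendsto_const lim this] show "f w \<le> m + d" by simp
  qed
  have Gzz: "\<exists>L. ((\<lambda>t. (zz t - p) \<bullet> (zz t - p)) \<longlongrightarrow> L) at_top" if p: "f p \<le> m" for p
  proof -
    obtain L where "(Gp p \<longlongrightarrow> L) at_top" using Glim[OF p] by blast
    moreover have "\<forall>\<^sub>F t in at_top. Gp p t = (zz t - p) \<bullet> (zz t - p)"
      using zzev by eventually_elim (simp add: Gp_def)
    ultimately have "((\<lambda>t. (zz t - p) \<bullet> (zz t - p)) \<longlongrightarrow> L) at_top" by (rule Lim_transform_eventually)
    then show ?thesis by (rule exI)
  qed
  have uniq: "w1 = w2" if w1: "f w1 \<le> m" and w2: "f w2 \<le> m"
    and s1: "filterlim s1 at_top sequentially" and s2: "filterlim s2 at_top sequentially"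
    and l1: "\<forall>y. (\<lambda>n. zz (s1 n) \<bullet> y) \<longlonglongrightarrow> w1 \<bullet> y"
    and l2: "\<forall>y. (\<lambda>n. zz (s2 n) \<bullet> y) \<longlonglongrightarrow> w2 \<bullet> y" for w1 w2 s1 s2
  proof -
    obtain L1 where L1: "((\<lambda>t. (zz t - w1) \<bullet> (zz t - w1)) \<longlongrightarrow> L1) at_top" using Gzz[OF w1] by blast
    obtain L2 where L2: "((\<lambda>t. (zz t - w2) \<bullet> (zz t - w2)) \<longlongrightarrow> L2) at_top" using Gzz[OF w2] by blast
    define D where "D t = (zz t - w1) \<bullet> (zz t - w1) - (zz t - w2) \<bullet> (zz t - w2)" for t
    have Dlim: "(D \<longlongrightarrow> L1 - L2) at_top" unfolding D_def by (intro tendsto_intros L1 L2)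
    have Deq: "D t = w1 \<bullet> w1 - w2 \<bullet> w2 - 2 * (zz t \<bullet> (w1 - w2))" for t
      unfolding D_def by (simp add: inner_diff_left inner_diff_right inner_commute algebra_simps)
    have a: "(\<lambda>n. D (si n)) \<longlonglongrightarrow> L1 - L2" if "filterlim si at_top sequentially" for si
      using filterlim_compose[OF Dlim that] .
    have b: "(\<lambda>n. D (si n)) \<longlonglongrightarrow> w1 \<bullet> w1 - w2 \<bullet> w2 - 2 * (wi \<bullet> (w1 - w2))"
      if "\<forall>y. (\<lambda>n. zz (si n) \<bullet> y) \<longlonglongrightarrow> wi \<bullet> y" for si wi
      unfolding Deq by (rule tendsto_diff[OF tendsto_const tendsto_mult[OF tendsto_const that[rule_format, of "w1 - w2"]]])
    have "w1 \<bullet> w1 - w2 \<bullet> w2 - 2 * (w1 \<bullet> (w1 - w2)) = L1 - L2"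
      using LIMSEQ_unique[OF b[OF l1] a[OF s1]] .
    moreover have "w1 \<bullet> w1 - w2 \<bullet> w2 - 2 * (w2 \<bullet> (w1 - w2)) = L1 - L2"
      using LIMSEQ_unique[OF b[OF l2] a[OF s2]] .
    ultimately have "(w1 - w2) \<bullet> (w1 - w2) = 0" by (simp add: inner_diff_left)
    then show ?thesis by simp
  qed
  obtain r ps where r: "strict_mono r" and psl: "\<forall>y. (\<lambda>n. zz (real (r n)) \<bullet> y) \<longlonglongrightarrow> ps \<bullet> y"
    using weak_compact[of "\<lambda>n. zz (real n)" B, OF zzb] by blast
  have sr: "filterlim (\<lambda>n. real (r n)) at_top sequentially"
    using filterlim_compose[OF filterlim_real_sequentially filterlim_subseq[OF r]] .
  have psm: "f ps \<le> m" using lsc[OF sr psl] .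
  have zzweak: "((\<lambda>t. zz t \<bullet> y) \<longlongrightarrow> ps \<bullet> y) at_top" for y
  proof (rule tendsto_at_topI_sequentially)
    fix X :: "nat \<Rightarrow> real" assume X: "filterlim X at_top sequentially"
    show "(\<lambda>n. zz (X n) \<bullet> y) \<longlonglongrightarrow> ps \<bullet> y"
    proof (rule subseq_principle)
      fix q :: "nat \<Rightarrow> nat" assume q: "strict_mono q"
      obtain q' w where q': "strict_mono q'" and wl: "\<forall>y. (\<lambda>n. zz (X (q (q' n))) \<bullet> y) \<longlonglongrightarrow> w \<bullet> y"
        using weak_compact[of "\<lambda>n. zz (X (q n))" B, OF zzb] by blast
      have sq: "filterlim (\<lambda>n. X (q (q' n))) at_top sequentially"
        using filterlim_compose[OF X filterlim_subseq[OF strict_mono_o[OF q q']]] by (simp add: o_def)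
      have wm: "f w \<le> m" using lsc[OF sq wl] .
      have "w = ps" using uniq[OF wm psm sq sr wl psl] .
      then show "\<exists>q'. strict_mono q' \<and> (\<lambda>n. zz (X (q (q' n))) \<bullet> y) \<longlonglongrightarrow> ps \<bullet> y"
        using q' wl by blast
    qed
  qed
  have zweak: "((\<lambda>t. z t \<bullet> y) \<longlongrightarrow> ps \<bullet> y) at_top" for y
  proof -
    have "\<forall>\<^sub>F t in at_top. zz t \<bullet> y = z t \<bullet> y" using zzev by eventually_elim simp
    then show ?thesis by (rule Lim_transform_eventually[OF zzweak])
  qed
  have xweak: "((\<lambda>t. x t \<bullet> y) \<longlongrightarrow> ps \<bullet> y) at_top" for y
  proof (rule tendstoI)
    fix e :: real assume e: "e > 0"
    define l where "l = ps \<bullet> y"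
    define e1 where "e1 = e / 3"
    have e1: "e1 > 0" unfolding e1_def using e by simp
    have "\<forall>\<^sub>F t in at_top. dist (z t \<bullet> y) l < e1" unfolding l_def using tendstoD[OF zweak e1] .
    then obtain N where N: "\<And>t. t \<ge> N \<Longrightarrow> dist (z t \<bullet> y) l < e1" unfolding eventually_at_top_linorder by blast
    define T where "T = max N t0"
    have T: "t0 \<le> T" unfolding T_def by simp
    have zT: "\<bar>z t \<bullet> y - l\<bar> \<le> e1" if "t \<ge> T" for t
      using N[of t] that unfolding T_def by (simp add: dist_real_def)
    have p0: "\<tau> u powr (- 0) = 1" if "u \<ge> t0" for u using tau_pos[OF that] by simp
    have common: "\<And>t. t0 \<le> t \<Longrightarrow> 0 < \<tau> t" "\<And>t. t0 \<le> t \<Longrightarrow> 0 < \<tau>' t"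
       "\<And>t. t0 \<le> t \<Longrightarrow> (\<tau> has_real_derivative \<tau>' t) (at t within {t0..})"
      using tau_pos tau'_pos tau_d1 by auto
    have xyd: "((\<lambda>t. x t \<bullet> y) has_real_derivative x' u \<bullet> y) (at u within {t0..})" if u: "u \<ge> t0" for u
      using vd_inner[OF x_d1[OF u] has_vector_derivative_const[of y]] by simp
    have xeq: "x' u \<bullet> y = \<gamma> * \<tau>' u / \<tau> u * ((z u \<bullet> y - l) - (x u \<bullet> y - l))" if u: "u \<ge> t0" for u
      unfolding xz[OF u] by (simp add: inner_scaleR_left inner_diff_left)
    have up: "x t \<bullet> y - l \<le> (\<tau> T powr \<gamma> * (x T \<bullet> y - l)) * \<tau> t powr (-\<gamma>) + (\<gamma> * e1 / (\<gamma> - 0)) * \<tau> t powr (-0)"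
      if t: "t \<ge> T" for t
    proof (rule avg2[OF T _ _ _ common, of 0 \<gamma> e1 "\<lambda>t. x t \<bullet> y - l" "\<lambda>t. x' t \<bullet> y" "\<lambda>t. z t \<bullet> y - l" t])
      show "0 < \<gamma>" using g1 .
      show "(0::real) \<le> 0" by simp
      show "0 \<le> e1" using e1 by simp
      show "((\<lambda>t. x t \<bullet> y - l) has_real_derivative x' u \<bullet> y) (at u within {t0..})" if u: "t0 \<le> u" for u
        using DERIV_diff[OF xyd[OF u] DERIV_const[of l]] by simp
      show "x' u \<bullet> y \<le> \<gamma> * \<tau>' u / \<tau> u * (z u \<bullet> y - l - (x u \<bullet> y - l))" if u: "T \<le> u" for u
        using xeq[of u] u T by simp
      show "z u \<bullet> y - l \<le> e1 * \<tau> u powr - 0" if u: "T \<le> u" for u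
        using zT[OF u] p0[of u] u T by simp
      show "T \<le> t" using t .
    qed
    have lo: "l - x t \<bullet> y \<le> (\<tau> T powr \<gamma> * (l - x T \<bullet> y)) * \<tau> t powr (-\<gamma>) + (\<gamma> * e1 / (\<gamma> - 0)) * \<tau> t powr (-0)"
      if t: "t \<ge> T" for t
    proof (rule avg2[OF T _ _ _ common, of 0 \<gamma> e1 "\<lambda>t. l - x t \<bullet> y" "\<lambda>t. - (x' t \<bullet> y)" "\<lambda>t. l - z t \<bullet> y" t])
      show "0 < \<gamma>" using g1 .
      show "(0::real) \<le> 0" by simp
      show "0 \<le> e1" using e1 by simp
      show "((\<lambda>t. l - x t \<bullet> y) has_real_derivative - (x' u \<bullet> y)) (at u within {t0..})" if u: "t0 \<le> u" for u
        using DERIV_diff[OF DERIV_const[of l] xyd[OF u]] by simp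
      show "- (x' u \<bullet> y) \<le> \<gamma> * \<tau>' u / \<tau> u * (l - z u \<bullet> y - (l - x u \<bullet> y))" if u: "T \<le> u" for u
        using xeq[of u] u T by (simp add: algebra_simps)
      show "l - z u \<bullet> y \<le> e1 * \<tau> u powr - 0" if u: "T \<le> u" for u
        using zT[OF u] p0[of u] u T by simp
      show "T \<le> t" using t .
    qed
    define C1 where "C1 = \<tau> T powr \<gamma> * (x T \<bullet> y - l)"
    define C2 where "C2 = \<tau> T powr \<gamma> * (l - x T \<bullet> y)"
    have lim0: "((\<lambda>t. \<tau> t powr (- \<gamma>)) \<longlongrightarrow> 0) at_top"
      using tendsto_neg_powr[OF _ tau_lim] g1 by simp
    have ev1: "\<forall>\<^sub>F t in at_top. (\<bar>C1\<bar> + \<bar>C2\<bar>) * \<tau> t powr (- \<gamma>) < e1"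
      using order_tendstoD(2)[OF tendsto_mult_right_zero[OF lim0, of "\<bar>C1\<bar> + \<bar>C2\<bar>"] e1] .
    show "\<forall>\<^sub>F t in at_top. dist (x t \<bullet> y) (ps \<bullet> y) < e"
      using ev1 eventually_ge_at_top[of T]
    proof eventually_elim
      case (elim t)
      have tt: "\<tau> t > 0" using tau_pos[of t] elim T by simp
      have q: "\<tau> t powr (-\<gamma>) \<ge> 0" by simp
      have a1: "C1 * \<tau> t powr (-\<gamma>) < e1"
        using elim(1) q by (smt (verit) abs_ge_self abs_ge_zero mult_right_mono)
      have a2: "C2 * \<tau> t powr (-\<gamma>) < e1"
        using elim(1) q by (smt (verit) abs_ge_self abs_ge_zero mult_right_mono)
      have g: "\<gamma> * e1 / (\<gamma> - 0) = e1" using g1 by simp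
      have u1: "x t \<bullet> y - l \<le> C1 * \<tau> t powr (-\<gamma>) + e1" using up[OF elim(2)] tt unfolding C1_def g by simp
      have u2: "l - x t \<bullet> y \<le> C2 * \<tau> t powr (-\<gamma>) + e1" using lo[OF elim(2)] tt unfolding C2_def g by simp
      show ?case unfolding dist_real_def l_def[symmetric] e1_def[symmetric]
        using u1 u2 a1 a2 e1_def by (simp add: abs_less_iff)
    qed
  qed
  have "weakly_tendsto_at_top x ps" unfolding weakly_tendsto_at_top_def using xweak by blast
  moreover have "ps \<in> argmin_set f" using Siff psm by blast
  ultimately show ?thesis using part1 by blast
qed


end
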